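(* Let $T$ be a rooted tree. (i) $I_1(T)>I_0(T)$. (ii) If $v$ is a leaf of $T$, then $3I_v(T)\ge I(T)+2$. (iii) If $v$ and $w$ are distinct leaves of $T$, then $3I_{vw}(T)\ge I_v(T)$.
   Context: A rooted tree $T$ is a finite tree with a distinguished vertex, its root (a one-vertex tree's root counts as a leaf). For vertices $u,v$, the infimum of $u$ and $v$ is the vertex common to the path from $u$ to the root and the path from $v$ to the root that is furthest from the root. A set $X\subseteq V(T)$ is infima closed if the infimum of any two elements of $X$ lies in $X$. $I(T)$ denotes the number of nonempty infima closed subsets of $V(T)$; $I_0(T)$ the number of nonempty infima closed sets not containing the root; $I_1(T)$ the number of infima closed sets containing the root; $I_v(T)$ the number of infima closed sets containing vertex $v$; $I_{vw}(T)$ the number containing both $v$ and $w$. *)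

theory Defs
  imports Main
begin

text \<open>A rooted tree is represented by a finite vertex set V, a root r \<in> V and a
parent map par: every non-root vertex has its parent in V, and every vertex
reaches the root by iterating par (hence there are no cycles).\<close>

definition rooted_tree :: "'a set \<Rightarrow> 'a \<Rightarrow> ('a \<Rightarrow> 'a) \<Rightarrow> bool" where
  "rooted_tree V r par \<longleftrightarrow> finite V \<and> r \<in> V \<and> (\<forall>v\<in>V - {r}. par v \<in> V)
     \<and> (\<forall>v\<in>V. \<exists>n. (par ^^ n) v = r)"

definition on_root_path :: "'a \<Rightarrow> ('a \<Rightarrow> 'a) \<Rightarrow> 'a \<Rightarrow> 'a \<Rightarrow> bool" where
  "on_root_path r par u v \<longleftrightarrow> (\<exists>n. (par ^^ n) v = u \<and> (\<forall>k<n. (par ^^ k) v \<noteq> r))"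

definition tree_inf :: "'a \<Rightarrow> ('a \<Rightarrow> 'a) \<Rightarrow> 'a \<Rightarrow> 'a \<Rightarrow> 'a" where
  "tree_inf r par u v = (THE w. on_root_path r par w u \<and> on_root_path r par w v \<and>
      (\<forall>w'. on_root_path r par w' u \<and> on_root_path r par w' v \<longrightarrow> on_root_path r par w' w))"

definition is_leaf :: "'a set \<Rightarrow> 'a \<Rightarrow> ('a \<Rightarrow> 'a) \<Rightarrow> 'a \<Rightarrow> bool" where
  "is_leaf V r par v \<longleftrightarrow> v \<in> V \<and> \<not> (\<exists>u\<in>V - {r}. par u = v)"

definition inf_closed :: "'a \<Rightarrow> ('a \<Rightarrow> 'a) \<Rightarrow> 'a set \<Rightarrow> bool" where
  "inf_closed r par X \<longleftrightarrow> (\<forall>x\<in>X. \<forall>y\<in>X. tree_inf r par x y \<in> X)"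

definition ic_sets :: "'a set \<Rightarrow> 'a \<Rightarrow> ('a \<Rightarrow> 'a) \<Rightarrow> 'a set set" where
  "ic_sets V r par = {X. X \<subseteq> V \<and> inf_closed r par X}"

definition I_all :: "'a set \<Rightarrow> 'a \<Rightarrow> ('a \<Rightarrow> 'a) \<Rightarrow> nat" where
  "I_all V r par = card {X \<in> ic_sets V r par. X \<noteq> {}}"

definition I0 :: "'a set \<Rightarrow> 'a \<Rightarrow> ('a \<Rightarrow> 'a) \<Rightarrow> nat" where
  "I0 V r par = card {X \<in> ic_sets V r par. X \<noteq> {} \<and> r \<notin> X}"

definition I1 :: "'a set \<Rightarrow> 'a \<Rightarrow> ('a \<Rightarrow> 'a) \<Rightarrow> nat" where
  "I1 V r par = card {X \<in> ic_sets V r par. r \<in> X}"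

definition Iv :: "'a set \<Rightarrow> 'a \<Rightarrow> ('a \<Rightarrow> 'a) \<Rightarrow> 'a \<Rightarrow> nat" where
  "Iv V r par v = card {X \<in> ic_sets V r par. v \<in> X}"

definition Ivw :: "'a set \<Rightarrow> 'a \<Rightarrow> ('a \<Rightarrow> 'a) \<Rightarrow> 'a \<Rightarrow> 'a \<Rightarrow> nat" where
  "Ivw V r par v w = card {X \<in> ic_sets V r par. v \<in> X \<and> w \<in> X}"

end

theory Submission
  imports Defs
begin

definition dep :: "'a \<Rightarrow> ('a \<Rightarrow> 'a) \<Rightarrow> 'a \<Rightarrow> nat" where
  "dep r par x = (LEAST n. (par ^^ n) x = r)"

lemma rt_finite: "rooted_tree V r par \<Longrightarrow> finite V" by (simp add: rooted_tree_def)
lemma rt_root: "rooted_tree V r par \<Longrightarrow> r \<in> V" by (simp add: rooted_tree_def)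
lemma rt_par: "rooted_tree V r par \<Longrightarrow> v \<in> V \<Longrightarrow> v \<noteq> r \<Longrightarrow> par v \<in> V" by (simp add: rooted_tree_def)
lemma rt_reach: "rooted_tree V r par \<Longrightarrow> v \<in> V \<Longrightarrow> \<exists>n. (par ^^ n) v = r" by (simp add: rooted_tree_def)

lemma dep_at: assumes "rooted_tree V r par" "x \<in> V" shows "(par ^^ dep r par x) x = r"
  unfolding dep_def using rt_reach[OF assms] by (rule LeastI_ex[where P="\<lambda>n. (par ^^ n) x = r"])

lemma dep_min: assumes "k < dep r par x" shows "(par ^^ k) x \<noteq> r"
  using assms unfolding dep_def using not_less_Least by blast

lemma funpow_app: "(f ^^ m) ((f ^^ n) x) = (f ^^ (m + n)) x"
  by (simp add: funpow_add)

lemma dep_iter: assumes "rooted_tree V r par" "x \<in> V" "k \<le> dep r par x"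
  shows "dep r par ((par ^^ k) x) = dep r par x - k"
proof -
  have a: "(par ^^ (dep r par x - k)) ((par ^^ k) x) = r"
    using dep_at[OF assms(1,2)] assms(3) by (simp add: funpow_app)
  have "(LEAST n. (par ^^ n) ((par ^^ k) x) = r) = dep r par x - k"
  proof (rule Least_equality)
    show "(par ^^ (dep r par x - k)) ((par ^^ k) x) = r" by (rule a)
  next
    fix y assume "(par ^^ y) ((par ^^ k) x) = r"
    hence "(par ^^ (y + k)) x = r" by (simp add: funpow_app)
    thus "dep r par x - k \<le> y" using dep_min[of "y+k" r par x] by linarith
  qed
  then show ?thesis unfolding dep_def .
qed

lemma iter_in: assumes "rooted_tree V r par" "x \<in> V" shows "k \<le> dep r par x \<Longrightarrow> (par ^^ k) x \<in> V"
proof (induction k)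
  case 0 then show ?case using assms by simp
next
  case (Suc k)
  hence "(par ^^ k) x \<in> V" "(par ^^ k) x \<noteq> r" using dep_min[of k r par x] by auto
  then show ?case using rt_par[OF assms(1)] by simp
qed

lemma onrp_iff: assumes "rooted_tree V r par" "x \<in> V"
  shows "on_root_path r par u x \<longleftrightarrow> (\<exists>n\<le>dep r par x. (par ^^ n) x = u)"
proof
  assume "on_root_path r par u x"
  then obtain n where n: "(par ^^ n) x = u" "\<forall>k<n. (par ^^ k) x \<noteq> r" unfolding on_root_path_def by blast
  have "n \<le> dep r par x"
  proof (rule ccontr)
    assume "\<not> n \<le> dep r par x"
    then show False using n(2) dep_at[OF assms] by (meson not_le)
  qed
  then show "\<exists>n\<le>dep r par x. (par ^^ n) x = u" using n by blast
next
  assume "\<exists>n\<le>dep r par x. (par ^^ n) x = u"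
  then obtain n where n: "n \<le> dep r par x" "(par ^^ n) x = u" by blast
  have "\<forall>k<n. (par ^^ k) x \<noteq> r"
  proof (intro allI impI)
    fix k assume "k < n" then have "k < dep r par x" using n(1) by linarith
    then show "(par ^^ k) x \<noteq> r" by (rule dep_min)
  qed
  then show "on_root_path r par u x" unfolding on_root_path_def using n(2) by blast
qed

lemma anc_refl: "on_root_path r par x x"
  unfolding on_root_path_def by (rule exI[of _ 0]) simp

lemma anc_in: assumes "rooted_tree V r par" "x \<in> V" "on_root_path r par u x" shows "u \<in> V"
proof -
  obtain n where "n \<le> dep r par x" "(par ^^ n) x = u" using onrp_iff[OF assms(1,2)] assms(3) by blast
  then show ?thesis using iter_in[OF assms(1,2)] by blast
qed

lemma anc_root: assumes "rooted_tree V r par" "x \<in> V" shows "on_root_path r par r x"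
  using onrp_iff[OF assms, of r] dep_at[OF assms] by blast

lemma dep_root: "dep r par r = 0"
  unfolding dep_def by (rule Least_equality) auto

lemma dep_pos: "rooted_tree V r par \<Longrightarrow> x \<in> V \<Longrightarrow> x \<noteq> r \<Longrightarrow> dep r par x \<ge> 1"
  using dep_at[of V r par x] by (metis funpow_0 less_one not_le)

lemma anc_par: "rooted_tree V r par \<Longrightarrow> x \<in> V \<Longrightarrow> x \<noteq> r \<Longrightarrow> on_root_path r par (par x) x"
proof -
  assume a: "rooted_tree V r par" "x \<in> V" "x \<noteq> r"
  have "(par ^^ 1) x = par x" by simp
  then show ?thesis using onrp_iff[OF a(1,2), of "par x"] dep_pos[OF a] by blast
qed

lemma anc_trans: assumes "rooted_tree V r par" "x \<in> V" "on_root_path r par b x" "on_root_path r par a b"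
  shows "on_root_path r par a x"
proof -
  obtain i where i: "i \<le> dep r par x" "(par ^^ i) x = b" using onrp_iff[OF assms(1,2)] assms(3) by blast
  have bV: "b \<in> V" using anc_in assms by metis
  obtain j where j: "j \<le> dep r par b" "(par ^^ j) b = a" using onrp_iff[OF assms(1) bV] assms(4) by blast
  have "dep r par b = dep r par x - i" using dep_iter[OF assms(1,2) i(1)] i(2) by simp
  hence "j + i \<le> dep r par x" "(par ^^ (j+i)) x = a" using i j by (auto simp: funpow_app[symmetric])
  then show ?thesis using onrp_iff[OF assms(1,2)] by blast
qed

lemma anc_dep: assumes "rooted_tree V r par" "x \<in> V" "on_root_path r par a x"
  shows "dep r par a \<le> dep r par x" "a \<noteq> x \<Longrightarrow> dep r par a < dep r par x"
proof -
  obtain i where i: "i \<le> dep r par x" "(par ^^ i) x = a" using onrp_iff[OF assms(1,2)] assms(3) by blast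
  have d: "dep r par a = dep r par x - i" using dep_iter[OF assms(1,2) i(1)] i(2) by simp
  then show "dep r par a \<le> dep r par x" by simp
  assume "a \<noteq> x" hence "i \<noteq> 0" using i by (cases i) auto
  then show "dep r par a < dep r par x" using d i(1) by linarith
qed

lemma anc_antisym: assumes "rooted_tree V r par" "a \<in> V" "b \<in> V" "on_root_path r par a b" "on_root_path r par b a"
  shows "a = b"
  using anc_dep[OF assms(1,3,4)] anc_dep[OF assms(1,2,5)] by fastforce

lemma anc_lin: assumes "rooted_tree V r par" "x \<in> V" "on_root_path r par a x" "on_root_path r par b x"
  shows "on_root_path r par a b \<or> on_root_path r par b a"
proof -
  obtain i where i: "i \<le> dep r par x" "(par ^^ i) x = a" using onrp_iff[OF assms(1,2)] assms(3) by blast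
  obtain j where j: "j \<le> dep r par x" "(par ^^ j) x = b" using onrp_iff[OF assms(1,2)] assms(4) by blast
  have aV: "a \<in> V" and bV: "b \<in> V" using anc_in assms by metis+
  have da: "dep r par a = dep r par x - i" using dep_iter[OF assms(1,2) i(1)] i(2) by simp
  have db: "dep r par b = dep r par x - j" using dep_iter[OF assms(1,2) j(1)] j(2) by simp
  show ?thesis
  proof (cases "i \<le> j")
    case True
    have "(par ^^ (j - i)) a = (par ^^ (j - i + i)) x" unfolding i(2)[symmetric] funpow_app ..
    hence "(par ^^ (j - i)) a = b" using j True by simp
    moreover have "j - i \<le> dep r par a" using da j True by linarith
    ultimately show ?thesis using onrp_iff[OF assms(1) aV] by blast
  next
    case False
    have "(par ^^ (i - j)) b = (par ^^ (i - j + j)) x" unfolding j(2)[symmetric] funpow_app ..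
    hence "(par ^^ (i - j)) b = a" using i False by simp
    moreover have "i - j \<le> dep r par b" using db i False by linarith
    ultimately show ?thesis using onrp_iff[OF assms(1) bV] by blast
  qed
qed

lemma anc_of_root: "rooted_tree V r par \<Longrightarrow> on_root_path r par u r \<Longrightarrow> u = r"
  using onrp_iff[of V r par r u] rt_root[of V r par] dep_root[of r par] by auto

lemma anc_step: assumes "rooted_tree V r par" "x \<in> V" "on_root_path r par u x" "u \<noteq> x"
  shows "on_root_path r par u (par x)"
proof -
  obtain i where i: "i \<le> dep r par x" "(par ^^ i) x = u" using onrp_iff[OF assms(1,2)] assms(3) by blast
  have "i \<ge> 1" using i assms(4) by (cases i) auto
  have xr: "x \<noteq> r" using assms(3,4) anc_of_root[OF assms(1)] by blast
  have pV: "par x \<in> V" using rt_par[OF assms(1,2) xr] .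
  have dp: "dep r par (par x) = dep r par x - 1" using dep_iter[OF assms(1,2), of 1] dep_pos[OF assms(1,2) xr] by simp
  have "(par ^^ (i - 1)) (par x) = (par ^^ (i - 1)) ((par ^^ 1) x)" by simp
  also have "\<dots> = (par ^^ i) x" using \<open>i \<ge> 1\<close> by (cases i) (auto simp: funpow_swap1)
  finally have "(par ^^ (i - 1)) (par x) = u" using i by simp
  moreover have "i - 1 \<le> dep r par (par x)" using dp i by linarith
  ultimately show ?thesis using onrp_iff[OF assms(1) pV] by blast
qed


definition isinf :: "'a \<Rightarrow> ('a \<Rightarrow> 'a) \<Rightarrow> 'a \<Rightarrow> 'a \<Rightarrow> 'a \<Rightarrow> bool" where
  "isinf r par x y w \<longleftrightarrow> on_root_path r par w x \<and> on_root_path r par w y \<and>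
      (\<forall>w'. on_root_path r par w' x \<and> on_root_path r par w' y \<longrightarrow> on_root_path r par w' w)"

lemma isinf_comm: "isinf r par x y w \<longleftrightarrow> isinf r par y x w"
  unfolding isinf_def by blast

lemma isinf_ex: assumes rt: "rooted_tree V r par" and xy: "x \<in> V" "y \<in> V"
  shows "\<exists>w. isinf r par x y w"
proof -
  let ?C = "{w. on_root_path r par w x \<and> on_root_path r par w y}"
  have sub: "?C \<subseteq> V" using anc_in[OF rt xy(1)] by blast
  have fin: "finite ?C" using finite_subset[OF sub rt_finite[OF rt]] .
  have ne: "r \<in> ?C" using anc_root[OF rt] xy by blast
  let ?m = "Max (dep r par ` ?C)"
  have "?m \<in> dep r par ` ?C" using fin ne by (intro Max_in) auto
  then obtain w where w': "?m = dep r par w" "w \<in> ?C" by (rule imageE)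
  have w: "w \<in> ?C" "dep r par w = ?m" using w' by auto
  have mx: "\<And>w'. w' \<in> ?C \<Longrightarrow> dep r par w' \<le> dep r par w"
    using w(2) fin by (simp add: Max_ge)
  have "isinf r par x y w" unfolding isinf_def
  proof (intro conjI allI impI)
    show "on_root_path r par w x" "on_root_path r par w y" using w(1) by auto
  next
    fix w' assume h: "on_root_path r par w' x \<and> on_root_path r par w' y"
    have "on_root_path r par w' w \<or> on_root_path r par w w'"
      using anc_lin[OF rt xy(1)] h w(1) by blast
    moreover
    { assume a: "on_root_path r par w w'" "w \<noteq> w'"
      have "w' \<in> V" using h anc_in[OF rt xy(1)] by blast
      hence "dep r par w < dep r par w'" using anc_dep(2)[OF rt _ a(1)] a(2) by blast
      moreover have "dep r par w' \<le> dep r par w" using mx h by blast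
      ultimately have False by simp }
    ultimately show "on_root_path r par w' w" using anc_refl by blast
  qed
  then show ?thesis by blast
qed

lemma isinf_unique: assumes rt: "rooted_tree V r par" and xy: "x \<in> V"
  and "isinf r par x y w1" "isinf r par x y w2" shows "w1 = w2"
proof -
  have "w1 \<in> V" "w2 \<in> V" using assms anc_in[OF rt xy] unfolding isinf_def by blast+
  then show ?thesis using anc_antisym[OF rt] assms(3,4) unfolding isinf_def by blast
qed

lemma tree_inf_eq: assumes rt: "rooted_tree V r par" and xy: "x \<in> V" "y \<in> V"
  and w: "isinf r par x y w" shows "tree_inf r par x y = w"
  unfolding tree_inf_def
proof (rule the_equality)
  show "on_root_path r par w x \<and> on_root_path r par w y \<and>
      (\<forall>w'. on_root_path r par w' x \<and> on_root_path r par w' y \<longrightarrow> on_root_path r par w' w)"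
    using w unfolding isinf_def .
next
  fix w' assume "on_root_path r par w' x \<and> on_root_path r par w' y \<and>
      (\<forall>w''. on_root_path r par w'' x \<and> on_root_path r par w'' y \<longrightarrow> on_root_path r par w'' w')"
  then have "isinf r par x y w'" unfolding isinf_def .
  then show "w' = w" using isinf_unique[OF rt xy(1)] w by blast
qed

lemma tree_inf_isinf: assumes rt: "rooted_tree V r par" and xy: "x \<in> V" "y \<in> V"
  shows "isinf r par x y (tree_inf r par x y)"
proof -
  obtain w where w: "isinf r par x y w" using isinf_ex[OF assms] by blast
  then show ?thesis using tree_inf_eq[OF assms w] by simp
qed

lemma inf_in: assumes rt: "rooted_tree V r par" and xy: "x \<in> V" "y \<in> V"
  shows "tree_inf r par x y \<in> V"
  using tree_inf_isinf[OF assms] anc_in[OF rt xy(1)] unfolding isinf_def by blast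

lemma inf_comm: assumes rt: "rooted_tree V r par" and xy: "x \<in> V" "y \<in> V"
  shows "tree_inf r par x y = tree_inf r par y x"
proof -
  have "isinf r par x y (tree_inf r par y x)" using tree_inf_isinf[OF rt xy(2,1)] isinf_comm[of r par x y] by simp
  then show ?thesis using tree_inf_eq[OF assms] by blast
qed

lemma inf_root: assumes rt: "rooted_tree V r par" and x: "x \<in> V"
  shows "tree_inf r par x r = r" "tree_inf r par r x = r"
proof -
  have rV: "r \<in> V" using rt_root[OF rt] .
  have "isinf r par x r r" unfolding isinf_def
    using anc_root[OF rt x] anc_refl[of r par r] anc_of_root[OF rt] by blast
  then show "tree_inf r par x r = r" using tree_inf_eq[OF rt x rV] by blast
  then show "tree_inf r par r x = r" using inf_comm[OF rt x rV] by simp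
qed

locale sub =
  fixes V :: "'a set" and r :: 'a and par :: "'a \<Rightarrow> 'a" and c :: 'a
  assumes rt: "rooted_tree V r par" and cV: "c \<in> V" and cr: "c \<noteq> r" and pc: "par c = r"
begin

definition V1 where "V1 = {x \<in> V. on_root_path r par c x}"
definition V2 where "V2 = V - V1"

lemma dep_c: "dep r par c = 1"
proof -
  have "(LEAST n. (par ^^ n) c = r) = 1"
  proof (rule Least_equality)
    show "(par ^^ 1) c = r" using pc by simp
  next
    fix y assume "(par ^^ y) c = r" then show "1 \<le> y" using cr by (cases y) auto
  qed
  then show ?thesis unfolding dep_def .
qed

lemma anc_c: "on_root_path r par w c \<Longrightarrow> w = c \<or> w = r"
proof -
  assume "on_root_path r par w c"
  then obtain n where "n \<le> 1" "(par ^^ n) c = w" using onrp_iff[OF rt cV] dep_c by auto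
  then show ?thesis using pc by (cases n) auto
qed

lemma rV: "r \<in> V" using rt_root[OF rt] .
lemma cV1: "c \<in> V1" unfolding V1_def using cV anc_refl[of r par c] by blast
lemma rV1: "r \<notin> V1" unfolding V1_def using anc_of_root[OF rt] cr by blast
lemma rV2: "r \<in> V2" unfolding V2_def using rV rV1 by blast
lemma cV2: "c \<notin> V2" unfolding V2_def using cV1 by blast
lemma V1V: "V1 \<subseteq> V" unfolding V1_def by blast
lemma V2V: "V2 \<subseteq> V" unfolding V2_def by blast
lemma VU: "V = V1 \<union> V2" unfolding V2_def using V1V by blast
lemma V12: "V1 \<inter> V2 = {}" unfolding V2_def by blast

lemma rt1: "rooted_tree V1 c par"
  unfolding rooted_tree_def
proof (intro conjI ballI)
  show "finite V1" using finite_subset[OF V1V rt_finite[OF rt]] .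
  show "c \<in> V1" by (rule cV1)
next
  fix x assume x: "x \<in> V1 - {c}"
  then have xV: "x \<in> V" and a: "on_root_path r par c x" "x \<noteq> c" unfolding V1_def by auto
  have "x \<noteq> r" using x rV1 by blast
  then have "par x \<in> V" using rt_par[OF rt xV] by blast
  moreover have "on_root_path r par c (par x)" using anc_step[OF rt xV a(1)] a(2) by auto
  ultimately show "par x \<in> V1" unfolding V1_def by blast
next
  fix x assume "x \<in> V1"
  then show "\<exists>n. (par ^^ n) x = c" unfolding V1_def on_root_path_def by blast
qed

lemma rt2: "rooted_tree V2 r par"
  unfolding rooted_tree_def
proof (intro conjI ballI)
  show "finite V2" using finite_subset[OF V2V rt_finite[OF rt]] .
  show "r \<in> V2" by (rule rV2)
next
  fix x assume x: "x \<in> V2 - {r}"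
  then have xV: "x \<in> V" "x \<notin> V1" "x \<noteq> r" unfolding V2_def by auto
  have pV: "par x \<in> V" using rt_par[OF rt xV(1,3)] .
  have "par x \<notin> V1"
  proof
    assume "par x \<in> V1"
    then have "on_root_path r par c (par x)" unfolding V1_def by blast
    then have "on_root_path r par c x" using anc_trans[OF rt xV(1) anc_par[OF rt xV(1,3)]] by blast
    then show False using xV unfolding V1_def by blast
  qed
  then show "par x \<in> V2" using pV unfolding V2_def by blast
next
  fix x assume "x \<in> V2"
  then show "\<exists>n. (par ^^ n) x = r" using rt_reach[OF rt] V2V by blast
qed

lemma sub_onrp: assumes x: "x \<in> V1"
  shows "on_root_path c par u x \<longleftrightarrow> on_root_path r par u x \<and> u \<noteq> r"
proof -
  have xV: "x \<in> V" and ax: "on_root_path r par c x" using x unfolding V1_def by auto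
  obtain j where j: "j \<le> dep r par x" "(par ^^ j) x = c" using onrp_iff[OF rt xV] ax by blast
  have "dep r par c = dep r par x - j" using dep_iter[OF rt xV j(1)] j(2) by simp
  then have jd: "j = dep r par x - 1" "dep r par x \<ge> 1" using dep_c j(1) by auto
  show ?thesis
  proof
    assume "on_root_path c par u x"
    then obtain n where n: "(par ^^ n) x = u" "\<forall>k<n. (par ^^ k) x \<noteq> c" unfolding on_root_path_def by blast
    have "n \<le> j"
    proof (rule ccontr)
      assume "\<not> n \<le> j" then have "j < n" by simp
      then show False using n(2) j(2) by blast
    qed
    then have "n < dep r par x" using jd by linarith
    then have "u \<noteq> r" using dep_min[OF \<open>n < dep r par x\<close>] n(1) by simp
    moreover have "\<exists>n'\<le>dep r par x. (par ^^ n') x = u" using n(1) \<open>n < dep r par x\<close> by (intro exI[of _ n]) auto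
    then have "on_root_path r par u x" using onrp_iff[OF rt xV] by blast
    ultimately show "on_root_path r par u x \<and> u \<noteq> r" by blast
  next
    assume h: "on_root_path r par u x \<and> u \<noteq> r"
    then obtain n where n: "n \<le> dep r par x" "(par ^^ n) x = u" using onrp_iff[OF rt xV] by blast
    have "n \<noteq> dep r par x" using h n(2) dep_at[OF rt xV] by auto
    then have nl: "n < dep r par x" using n(1) by linarith
    have "\<forall>k<n. (par ^^ k) x \<noteq> c"
    proof (intro allI impI)
      fix k assume k: "k < n"
      show "(par ^^ k) x \<noteq> c"
      proof
        assume "(par ^^ k) x = c"
        then have "dep r par c = dep r par x - k" using dep_iter[OF rt xV, of k] k nl by simp
        then show False using dep_c k nl by linarith
      qed
    qed
    then show "on_root_path c par u x" unfolding on_root_path_def using n(2) by blast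
  qed
qed

lemma inf_sub: assumes x: "x \<in> V1" and y: "y \<in> V1"
  shows "tree_inf c par x y = tree_inf r par x y"
proof -
  let ?w = "tree_inf c par x y"
  have i1: "isinf c par x y ?w" using tree_inf_isinf[OF rt1 x y] .
  have wV1: "?w \<in> V1" using inf_in[OF rt1 x y] .
  have xV: "x \<in> V" "y \<in> V" using x y V1V by auto
  have "isinf r par x y ?w" unfolding isinf_def
  proof (intro conjI allI impI)
    show "on_root_path r par ?w x" "on_root_path r par ?w y"
      using i1 sub_onrp[OF x] sub_onrp[OF y] unfolding isinf_def by blast+
  next
    fix w' assume h: "on_root_path r par w' x \<and> on_root_path r par w' y"
    show "on_root_path r par w' ?w"
    proof (cases "w' = r")
      case True then show ?thesis using anc_root[OF rt] wV1 V1V by blast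
    next
      case False
      then have "on_root_path c par w' x" "on_root_path c par w' y" using h sub_onrp[OF x] sub_onrp[OF y] by blast+
      then have "on_root_path c par w' ?w" using i1 unfolding isinf_def by blast
      then show ?thesis using sub_onrp[OF wV1] by blast
    qed
  qed
  then show ?thesis using tree_inf_eq[OF rt xV] by simp
qed

lemma ic1: "ic_sets V1 c par = ic_sets V1 r par"
proof -
  have "inf_closed c par X = inf_closed r par X" if "X \<subseteq> V1" for X
  proof -
    have "\<And>x y. x \<in> X \<Longrightarrow> y \<in> X \<Longrightarrow> tree_inf c par x y = tree_inf r par x y"
      using inf_sub that by blast
    then show ?thesis unfolding inf_closed_def by simp
  qed
  then show ?thesis unfolding ic_sets_def by blast
qed

lemma inf_cross: assumes x: "x \<in> V1" and y: "y \<in> V2"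
  shows "tree_inf r par x y = r" "tree_inf r par y x = r"
proof -
  have xV: "x \<in> V" "on_root_path r par c x" using x unfolding V1_def by auto
  have yV: "y \<in> V" "\<not> on_root_path r par c y" using y unfolding V2_def V1_def by auto
  have "isinf r par x y r" unfolding isinf_def
  proof (intro conjI allI impI)
    show "on_root_path r par r x" "on_root_path r par r y" using anc_root[OF rt] xV yV by auto
  next
    fix w' assume h: "on_root_path r par w' x \<and> on_root_path r par w' y"
    have "on_root_path r par w' c \<or> on_root_path r par c w'" using anc_lin[OF rt xV(1)] h xV(2) by blast
    moreover have "\<not> on_root_path r par c w'" using anc_trans[OF rt yV(1)] h yV(2) by blast
    ultimately have "w' = c \<or> w' = r" using anc_c by blast
    moreover have "w' \<noteq> c" using h yV(2) by blast
    ultimately show "on_root_path r par w' r" using anc_refl[of r par r] by blast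
  qed
  then show "tree_inf r par x y = r" using tree_inf_eq[OF rt xV(1) yV(1)] by blast
  then show "tree_inf r par y x = r" using inf_comm[OF rt xV(1) yV(1)] by simp
qed

lemma inf_V1: assumes x: "x \<in> V1" and y: "y \<in> V1" shows "tree_inf r par x y \<in> V1"
proof -
  have xV: "x \<in> V" "y \<in> V" "on_root_path r par c x" "on_root_path r par c y" using x y unfolding V1_def by auto
  have "on_root_path r par c (tree_inf r par x y)" using tree_inf_isinf[OF rt xV(1,2)] xV(3,4) unfolding isinf_def by blast
  then show ?thesis using inf_in[OF rt xV(1,2)] unfolding V1_def by blast
qed

lemma inf_V2: assumes x: "x \<in> V2" and y: "y \<in> V2" shows "tree_inf r par x y \<in> V2"
proof -
  have xV: "x \<in> V" "y \<in> V" "\<not> on_root_path r par c x" using x y unfolding V2_def V1_def by auto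
  have a: "on_root_path r par (tree_inf r par x y) x" using tree_inf_isinf[OF rt xV(1,2)] unfolding isinf_def by blast
  have "\<not> on_root_path r par c (tree_inf r par x y)" using anc_trans[OF rt xV(1) a] xV(3) by blast
  then show ?thesis using inf_in[OF rt xV(1,2)] unfolding V2_def V1_def by blast
qed

end

lemma fin_ic: "finite V \<Longrightarrow> finite {X \<in> ic_sets V r par. P X}"
  unfolding ic_sets_def by (rule finite_subset[of _ "Pow V"]) auto

lemma split_root: assumes "finite V"
  shows "card {X \<in> ic_sets V r par. P X} = card {X \<in> ic_sets V r par. r \<in> X \<and> P X} + card {X \<in> ic_sets V r par. r \<notin> X \<and> P X}"
proof -
  have "{X \<in> ic_sets V r par. P X} = {X \<in> ic_sets V r par. r \<in> X \<and> P X} \<union> {X \<in> ic_sets V r par. r \<notin> X \<and> P X}" by blast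
  moreover have "card (\<dots>) = card {X \<in> ic_sets V r par. r \<in> X \<and> P X} + card {X \<in> ic_sets V r par. r \<notin> X \<and> P X}"
    by (rule card_Un_disjoint) (auto intro: fin_ic[OF assms])
  ultimately show ?thesis by simp
qed

context sub begin

lemma finV: "finite V" using rt_finite[OF rt] .
lemma finV1: "finite V1" using finite_subset[OF V1V finV] .
lemma finV2: "finite V2" using finite_subset[OF V2V finV] .

lemma countA: "card {X \<in> ic_sets V r par. r \<in> X \<and> P (X \<inter> V1) \<and> Q (X \<inter> V2)}
   = card {A \<in> ic_sets V1 r par. P A} * card {B \<in> ic_sets V2 r par. r \<in> B \<and> Q B}"
proof -
  let ?S1 = "{A \<in> ic_sets V1 r par. P A}" and ?S2 = "{B \<in> ic_sets V2 r par. r \<in> B \<and> Q B}"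
  let ?L = "{X \<in> ic_sets V r par. r \<in> X \<and> P (X \<inter> V1) \<and> Q (X \<inter> V2)}"
  let ?f = "\<lambda>(A, B). A \<union> B"
  have key: "\<And>A B A' B'. A \<subseteq> V1 \<Longrightarrow> B \<subseteq> V2 \<Longrightarrow> A' \<subseteq> V1 \<Longrightarrow> B' \<subseteq> V2 \<Longrightarrow> A \<union> B = A' \<union> B' \<Longrightarrow> A = A' \<and> B = B'"
    using V12 by blast
  have inj: "inj_on ?f (?S1 \<times> ?S2)"
  proof (rule inj_onI)
    fix p q assume p: "p \<in> ?S1 \<times> ?S2" and q: "q \<in> ?S1 \<times> ?S2" and e: "?f p = ?f q"
    obtain A B where pAB: "p = (A, B)" by (cases p)
    obtain A' B' where qAB: "q = (A', B')" by (cases q)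
    have s: "A \<subseteq> V1" "B \<subseteq> V2" "A' \<subseteq> V1" "B' \<subseteq> V2" using p q unfolding pAB qAB ic_sets_def by auto
    have "A \<union> B = A' \<union> B'" using e unfolding pAB qAB by simp
    then show "p = q" using key[OF s] unfolding pAB qAB by simp
  qed
  have img: "?f ` (?S1 \<times> ?S2) = ?L"
  proof
    show "?f ` (?S1 \<times> ?S2) \<subseteq> ?L"
    proof (rule image_subsetI)
      fix p assume p: "p \<in> ?S1 \<times> ?S2"
      obtain A B where pAB: "p = (A, B)" by (cases p)
      have h: "A \<in> ?S1" "B \<in> ?S2" using p unfolding pAB by auto
      have s: "A \<subseteq> V1" "B \<subseteq> V2" "inf_closed r par A" "inf_closed r par B" "r \<in> B"
        using h unfolding ic_sets_def by auto
      have e: "(A \<union> B) \<inter> V1 = A" "(A \<union> B) \<inter> V2 = B" using s(1,2) V12 by blast+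
      have "inf_closed r par (A \<union> B)" unfolding inf_closed_def
      proof (intro ballI)
        fix x y assume xy: "x \<in> A \<union> B" "y \<in> A \<union> B"
        show "tree_inf r par x y \<in> A \<union> B"
        proof (cases "x \<in> A")
          case True
          show ?thesis
          proof (cases "y \<in> A")
            case True then show ?thesis using \<open>x \<in> A\<close> s(3) unfolding inf_closed_def by blast
          next
            case False then have "y \<in> B" using xy by blast
            then have y2: "y \<in> V2" using s(2) by blast
            have x1: "x \<in> V1" using \<open>x \<in> A\<close> s(1) by blast
            have "tree_inf r par x y = r" by (rule inf_cross(1)[OF x1 y2])
            then show ?thesis using s(5) by simp
          qed
        next
          case False then have xB: "x \<in> B" using xy by blast
          show ?thesis
          proof (cases "y \<in> A")
            case True then have y1: "y \<in> V1" using s(1) by blast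
            have x2: "x \<in> V2" using xB s(2) by blast
            have "tree_inf r par x y = r" by (rule inf_cross(2)[OF y1 x2])
            then show ?thesis using s(5) by simp
          next
            case False then have "y \<in> B" using xy by blast
            then show ?thesis using xB s(4) unfolding inf_closed_def by blast
          qed
        qed
      qed
      then have "A \<union> B \<in> ?L" using s e h V1V V2V unfolding ic_sets_def by auto
      then show "?f p \<in> ?L" unfolding pAB by simp
    qed
  next
    show "?L \<subseteq> ?f ` (?S1 \<times> ?S2)"
    proof
      fix X assume X: "X \<in> ?L"
      have s: "X \<subseteq> V" "inf_closed r par X" "r \<in> X" using X unfolding ic_sets_def by auto
      have c1: "inf_closed r par (X \<inter> V1)" using s(2) inf_V1 unfolding inf_closed_def by blast
      have c2: "inf_closed r par (X \<inter> V2)" using s(2) inf_V2 unfolding inf_closed_def by blast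
      have a: "X \<inter> V1 \<in> ?S1" using c1 X unfolding ic_sets_def by auto
      have b: "X \<inter> V2 \<in> ?S2" using c2 X rV2 unfolding ic_sets_def by auto
      have ab: "(X \<inter> V1, X \<inter> V2) \<in> ?S1 \<times> ?S2" using a b by (rule SigmaI)
      have "X = ?f (X \<inter> V1, X \<inter> V2)" using s(1) VU by auto
      then show "X \<in> ?f ` (?S1 \<times> ?S2)" using ab by (rule image_eqI)
    qed
  qed
  have "card ?L = card (?S1 \<times> ?S2)" using card_image[OF inj] img by simp
  also have "\<dots> = card ?S1 * card ?S2" by (rule card_cartesian_product)
  finally show ?thesis .
qed

lemma countB: "card {X \<in> ic_sets V r par. X \<noteq> {} \<and> r \<notin> X \<and> P X}
   = card {A \<in> ic_sets V1 r par. A \<noteq> {} \<and> P A} + card {B \<in> ic_sets V2 r par. B \<noteq> {} \<and> r \<notin> B \<and> P B}"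
proof -
  let ?S1 = "{A \<in> ic_sets V1 r par. A \<noteq> {} \<and> P A}" and ?S2 = "{B \<in> ic_sets V2 r par. B \<noteq> {} \<and> r \<notin> B \<and> P B}"
  have eq: "{X \<in> ic_sets V r par. X \<noteq> {} \<and> r \<notin> X \<and> P X} = ?S1 \<union> ?S2"
  proof
    show "{X \<in> ic_sets V r par. X \<noteq> {} \<and> r \<notin> X \<and> P X} \<subseteq> ?S1 \<union> ?S2"
    proof
      fix X assume X: "X \<in> {X \<in> ic_sets V r par. X \<noteq> {} \<and> r \<notin> X \<and> P X}"
      have s: "X \<subseteq> V" "inf_closed r par X" "r \<notin> X" using X unfolding ic_sets_def by auto
      have "X \<subseteq> V1 \<or> X \<subseteq> V2"
      proof (rule ccontr)
        assume "\<not> (X \<subseteq> V1 \<or> X \<subseteq> V2)"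
        then obtain x y where "x \<in> X" "x \<in> V1" "y \<in> X" "y \<in> V2" using s(1) VU by blast
        then have "tree_inf r par x y \<in> X" "tree_inf r par x y = r" using s(2) inf_cross(1) unfolding inf_closed_def by blast+
        then show False using s(3) by simp
      qed
      then show "X \<in> ?S1 \<union> ?S2" using X unfolding ic_sets_def by auto
    qed
  next
    show "?S1 \<union> ?S2 \<subseteq> {X \<in> ic_sets V r par. X \<noteq> {} \<and> r \<notin> X \<and> P X}"
      using V1V V2V rV1 unfolding ic_sets_def by auto
  qed
  have dis: "?S1 \<inter> ?S2 = {}" using V12 unfolding ic_sets_def by auto
  show ?thesis unfolding eq
    by (rule card_Un_disjoint[OF fin_ic[OF finV1] fin_ic[OF finV2] dis])
qed

lemma ic_card1: "card (ic_sets V1 r par) = I_all V1 c par + 1"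
proof -
  have "ic_sets V1 r par = insert {} {X \<in> ic_sets V1 r par. X \<noteq> {}}"
    unfolding ic_sets_def inf_closed_def by auto
  moreover have "finite {X \<in> ic_sets V1 r par. X \<noteq> {}}" using fin_ic[OF finV1] .
  then have "card (insert {} {X \<in> ic_sets V1 r par. X \<noteq> {}}) = card {X \<in> ic_sets V1 r par. X \<noteq> {}} + 1" by simp
  ultimately show ?thesis unfolding I_all_def ic1 by metis
qed

lemma F_I1: "I1 V r par = (I_all V1 c par + 1) * I1 V2 r par"
proof -
  have "I1 V r par = card {X \<in> ic_sets V r par. r \<in> X \<and> True \<and> True}" unfolding I1_def by simp
  also have "\<dots> = card {A \<in> ic_sets V1 r par. True} * card {B \<in> ic_sets V2 r par. r \<in> B \<and> True}"
    by (rule countA)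
  also have "\<dots> = (I_all V1 c par + 1) * I1 V2 r par" using ic_card1 unfolding I1_def by simp
  finally show ?thesis .
qed

lemma F_I0: "I0 V r par = I_all V1 c par + I0 V2 r par"
proof -
  have "I0 V r par = card {X \<in> ic_sets V r par. X \<noteq> {} \<and> r \<notin> X \<and> True}" unfolding I0_def by simp
  also have "\<dots> = card {A \<in> ic_sets V1 r par. A \<noteq> {} \<and> True} + card {B \<in> ic_sets V2 r par. B \<noteq> {} \<and> r \<notin> B \<and> True}"
    by (rule countB)
  also have "\<dots> = I_all V1 c par + I0 V2 r par" unfolding I_all_def I0_def ic1 by simp
  finally show ?thesis .
qed

lemma F_Iv: assumes v: "v \<in> V1" shows "Iv V r par v = Iv V1 c par v * (1 + I1 V2 r par)"
proof -
  have v2: "v \<notin> V2" using v V12 by blast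
  have "Iv V r par v = card {X \<in> ic_sets V r par. r \<in> X \<and> v \<in> X} + card {X \<in> ic_sets V r par. r \<notin> X \<and> v \<in> X}"
    unfolding Iv_def by (rule split_root[OF finV])
  also have "{X \<in> ic_sets V r par. r \<in> X \<and> v \<in> X} = {X \<in> ic_sets V r par. r \<in> X \<and> v \<in> X \<inter> V1 \<and> True}"
    using v by blast
  also have "card \<dots> = card {A \<in> ic_sets V1 r par. v \<in> A} * card {B \<in> ic_sets V2 r par. r \<in> B \<and> True}"
    by (rule countA)
  also have "{X \<in> ic_sets V r par. r \<notin> X \<and> v \<in> X} = {X \<in> ic_sets V r par. X \<noteq> {} \<and> r \<notin> X \<and> v \<in> X}"
    by blast
  also have "card \<dots> = card {A \<in> ic_sets V1 r par. A \<noteq> {} \<and> v \<in> A} + card {B \<in> ic_sets V2 r par. B \<noteq> {} \<and> r \<notin> B \<and> v \<in> B}"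
    by (rule countB)
  also have "{B \<in> ic_sets V2 r par. B \<noteq> {} \<and> r \<notin> B \<and> v \<in> B} = {}" using v2 unfolding ic_sets_def by blast
  also have "{A \<in> ic_sets V1 r par. A \<noteq> {} \<and> v \<in> A} = {A \<in> ic_sets V1 r par. v \<in> A}" by blast
  finally show ?thesis unfolding Iv_def I1_def ic1 by simp
qed

lemma F_Ivr: assumes v: "v \<in> V1" shows "Ivw V r par v r = Iv V1 c par v * I1 V2 r par"
proof -
  have "Ivw V r par v r = card {X \<in> ic_sets V r par. r \<in> X \<and> v \<in> X \<inter> V1 \<and> True}"
    unfolding Ivw_def using v by (metis (no_types, lifting) IntI IntD1 conj_commute)
  also have "\<dots> = card {A \<in> ic_sets V1 r par. v \<in> A} * card {B \<in> ic_sets V2 r par. r \<in> B \<and> True}"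
    by (rule countA)
  finally show ?thesis unfolding Iv_def I1_def ic1 by simp
qed

lemma F_Ivw1: assumes v: "v \<in> V1" and w: "w \<in> V1"
  shows "Ivw V r par v w = Ivw V1 c par v w * (1 + I1 V2 r par)"
proof -
  have v2: "v \<notin> V2" using v V12 by blast
  have "Ivw V r par v w = card {X \<in> ic_sets V r par. r \<in> X \<and> (v \<in> X \<and> w \<in> X)} + card {X \<in> ic_sets V r par. r \<notin> X \<and> (v \<in> X \<and> w \<in> X)}"
    unfolding Ivw_def by (rule split_root[OF finV])
  also have "{X \<in> ic_sets V r par. r \<in> X \<and> (v \<in> X \<and> w \<in> X)} = {X \<in> ic_sets V r par. r \<in> X \<and> (v \<in> X \<inter> V1 \<and> w \<in> X \<inter> V1) \<and> True}"
    using v w by blast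
  also have "card \<dots> = card {A \<in> ic_sets V1 r par. v \<in> A \<and> w \<in> A} * card {B \<in> ic_sets V2 r par. r \<in> B \<and> True}"
    by (rule countA)
  also have "{X \<in> ic_sets V r par. r \<notin> X \<and> (v \<in> X \<and> w \<in> X)} = {X \<in> ic_sets V r par. X \<noteq> {} \<and> r \<notin> X \<and> (v \<in> X \<and> w \<in> X)}"
    by blast
  also have "card \<dots> = card {A \<in> ic_sets V1 r par. A \<noteq> {} \<and> (v \<in> A \<and> w \<in> A)} + card {B \<in> ic_sets V2 r par. B \<noteq> {} \<and> r \<notin> B \<and> (v \<in> B \<and> w \<in> B)}"
    by (rule countB)
  also have "{B \<in> ic_sets V2 r par. B \<noteq> {} \<and> r \<notin> B \<and> (v \<in> B \<and> w \<in> B)} = {}" using v2 unfolding ic_sets_def by blast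
  also have "{A \<in> ic_sets V1 r par. A \<noteq> {} \<and> (v \<in> A \<and> w \<in> A)} = {A \<in> ic_sets V1 r par. v \<in> A \<and> w \<in> A}" by blast
  finally show ?thesis unfolding Ivw_def I1_def ic1 by simp
qed

lemma F_Ivw2: assumes v: "v \<in> V1" and w: "w \<in> V2" "w \<noteq> r"
  shows "Ivw V r par v w = Iv V1 c par v * Ivw V2 r par w r"
proof -
  have v2: "v \<notin> V2" using v V12 by blast
  have w1: "w \<notin> V1" using w V12 by blast
  have "Ivw V r par v w = card {X \<in> ic_sets V r par. r \<in> X \<and> (v \<in> X \<and> w \<in> X)} + card {X \<in> ic_sets V r par. r \<notin> X \<and> (v \<in> X \<and> w \<in> X)}"
    unfolding Ivw_def by (rule split_root[OF finV])
  also have "{X \<in> ic_sets V r par. r \<in> X \<and> (v \<in> X \<and> w \<in> X)} = {X \<in> ic_sets V r par. r \<in> X \<and> v \<in> X \<inter> V1 \<and> w \<in> X \<inter> V2}"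
    using v w by blast
  also have "card \<dots> = card {A \<in> ic_sets V1 r par. v \<in> A} * card {B \<in> ic_sets V2 r par. r \<in> B \<and> w \<in> B}"
    by (rule countA)
  also have "{X \<in> ic_sets V r par. r \<notin> X \<and> (v \<in> X \<and> w \<in> X)} = {X \<in> ic_sets V r par. X \<noteq> {} \<and> r \<notin> X \<and> (v \<in> X \<and> w \<in> X)}"
    by blast
  also have "card \<dots> = card {A \<in> ic_sets V1 r par. A \<noteq> {} \<and> (v \<in> A \<and> w \<in> A)} + card {B \<in> ic_sets V2 r par. B \<noteq> {} \<and> r \<notin> B \<and> (v \<in> B \<and> w \<in> B)}"
    by (rule countB)
  also have "{B \<in> ic_sets V2 r par. B \<noteq> {} \<and> r \<notin> B \<and> (v \<in> B \<and> w \<in> B)} = {}" using v2 unfolding ic_sets_def by blast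
  also have "{A \<in> ic_sets V1 r par. A \<noteq> {} \<and> (v \<in> A \<and> w \<in> A)} = {}" using w1 unfolding ic_sets_def by blast
  also have "{B \<in> ic_sets V2 r par. r \<in> B \<and> w \<in> B} = {B \<in> ic_sets V2 r par. w \<in> B \<and> r \<in> B}" by blast
  finally show ?thesis unfolding Ivw_def Iv_def ic1 by simp
qed

end

lemma child_ex: assumes rt: "rooted_tree V r par" and v: "v \<in> V" "v \<noteq> r"
  shows "\<exists>c. c \<in> V \<and> c \<noteq> r \<and> par c = r \<and> on_root_path r par c v"
proof -
  let ?d = "dep r par v"
  have d1: "?d \<ge> 1" using dep_pos[OF rt v] .
  let ?c = "(par ^^ (?d - 1)) v"
  have "?c \<in> V" using iter_in[OF rt v(1)] by simp
  moreover have "?c \<noteq> r" using dep_min[of "?d - 1" r par v] d1 by simp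
  moreover have "par ?c = (par ^^ Suc (?d - 1)) v" by simp
  then have "par ?c = r" using d1 dep_at[OF rt v(1)] by simp
  moreover have "\<exists>n\<le>?d. (par ^^ n) v = ?c" by (intro exI[of _ "?d - 1"]) auto
  then have "on_root_path r par ?c v" using onrp_iff[OF rt v(1)] by blast
  ultimately show ?thesis by blast
qed

lemma root_leaf: assumes rt: "rooted_tree V r par" and l: "is_leaf V r par r" and v: "v \<in> V"
  shows "v = r"
proof (rule ccontr)
  assume "v \<noteq> r"
  then obtain c where "c \<in> V" "c \<noteq> r" "par c = r" using child_ex[OF rt v] by blast
  then show False using l unfolding is_leaf_def by blast
qed

lemma partI: assumes rt: "rooted_tree V r par" shows "I0 V r par < I1 V r par"
proof -
  let ?S0 = "{X \<in> ic_sets V r par. X \<noteq> {} \<and> r \<notin> X}" and ?S1 = "{X \<in> ic_sets V r par. r \<in> X}"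
  have rV: "r \<in> V" using rt_root[OF rt] .
  have fin: "finite ?S1" using fin_ic[OF rt_finite[OF rt]] .
  have inj: "inj_on (insert r) ?S0"
  proof (rule inj_onI)
    fix X Y assume h: "X \<in> ?S0" "Y \<in> ?S0" "insert r X = insert r Y"
    then have "r \<notin> X" "r \<notin> Y" by auto
    then show "X = Y" using h(3) by (metis Diff_insert_absorb)
  qed
  have sub: "insert r ` ?S0 \<subseteq> ?S1 - {{r}}"
  proof (rule image_subsetI)
    fix X assume X: "X \<in> ?S0"
    have s: "X \<subseteq> V" "inf_closed r par X" "X \<noteq> {}" "r \<notin> X" using X unfolding ic_sets_def by auto
    have "inf_closed r par (insert r X)" unfolding inf_closed_def
    proof (intro ballI)
      fix x y assume xy: "x \<in> insert r X" "y \<in> insert r X"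
      have xV: "x \<in> V" "y \<in> V" using xy s(1) rV by auto
      show "tree_inf r par x y \<in> insert r X"
      proof (cases "x = r")
        case True then show ?thesis using inf_root(2)[OF rt xV(2)] by simp
      next
        case False
        show ?thesis
        proof (cases "y = r")
          case True then show ?thesis using inf_root(1)[OF rt xV(1)] by simp
        next
          case False
          then have "x \<in> X" "y \<in> X" using xy \<open>x \<noteq> r\<close> by auto
          then show ?thesis using s(2) unfolding inf_closed_def by blast
        qed
      qed
    qed
    moreover have "insert r X \<noteq> {r}" using s(3,4) by blast
    ultimately show "insert r X \<in> ?S1 - {{r}}" using s(1) rV unfolding ic_sets_def by auto
  qed
  have "card ?S0 \<le> card (?S1 - {{r}})"
    by (rule card_inj_on_le[OF inj sub]) (use fin in blast)
  moreover have "{r} \<in> ?S1"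
  proof -
    have "inf_closed r par {r}" unfolding inf_closed_def using inf_root(1)[OF rt rV] by simp
    then show ?thesis using rV unfolding ic_sets_def by auto
  qed
  then have "card (?S1 - {{r}}) < card ?S1" by (rule card_Diff1_less[OF fin])
  ultimately show ?thesis unfolding I0_def I1_def by linarith
qed

lemma I_all_split: assumes rt: "rooted_tree V r par" shows "I_all V r par = I0 V r par + I1 V r par"
proof -
  have "I_all V r par = card {X \<in> ic_sets V r par. r \<in> X \<and> X \<noteq> {}} + card {X \<in> ic_sets V r par. r \<notin> X \<and> X \<noteq> {}}"
    unfolding I_all_def by (rule split_root[OF rt_finite[OF rt]])
  also have "{X \<in> ic_sets V r par. r \<in> X \<and> X \<noteq> {}} = {X \<in> ic_sets V r par. r \<in> X}" by blast
  also have "{X \<in> ic_sets V r par. r \<notin> X \<and> X \<noteq> {}} = {X \<in> ic_sets V r par. X \<noteq> {} \<and> r \<notin> X}" by blast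
  finally show ?thesis unfolding I0_def I1_def by simp
qed

context sub begin

lemma leaf1: "is_leaf V r par v \<Longrightarrow> v \<in> V1 \<Longrightarrow> is_leaf V1 c par v"
  unfolding is_leaf_def using V1V rV1 by blast

lemma leaf2: "is_leaf V r par v \<Longrightarrow> v \<in> V2 \<Longrightarrow> is_leaf V2 r par v"
  unfolding is_leaf_def using V2V by blast

lemma cardV1: "card V1 < card V"
  using psubset_card_mono[OF finV] V1V rV rV1 by blast

lemma cardV2: "card V2 < card V"
  using psubset_card_mono[OF finV] V2V cV cV2 by blast

end

lemma arith2: fixes a b q z :: nat assumes "3 * a \<ge> b + 2" "q \<ge> z + 1"
  shows "3 * (a * (1 + q)) \<ge> (b + z) + (b + 1) * q + 2"
proof -
  have "(b + 2) * (1 + q) \<le> (3 * a) * (1 + q)" using assms(1) by (rule mult_right_mono) simp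
  then show ?thesis using assms(2) by (simp add: algebra_simps)
qed

lemma arith4: fixes a b q :: nat assumes "3 * a \<ge> b + 2" "q \<ge> 1"
  shows "3 * (a * q) \<ge> 1 + (b + 1) * q"
proof -
  have "(b + 2) * q \<le> (3 * a) * q" using assms(1) by (rule mult_right_mono) simp
  then show ?thesis using assms(2) by (simp add: algebra_simps)
qed

lemma main: "rooted_tree V r par \<Longrightarrow> is_leaf V r par v \<Longrightarrow>
   3 * Iv V r par v \<ge> I_all V r par + 2 \<and> 3 * Ivw V r par v r \<ge> 1 + I1 V r par \<and>
   (\<forall>w. is_leaf V r par w \<and> w \<noteq> v \<longrightarrow> 3 * Ivw V r par v w \<ge> Iv V r par v)"
proof (induction "card V" arbitrary: V r v rule: less_induct)
  case less
  note rt = less.prems(1) and lv = less.prems(2)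
  have vV: "v \<in> V" using lv unfolding is_leaf_def by blast
  have p1: "I0 V r par < I1 V r par" using partI[OF rt] .
  have sp: "I_all V r par = I0 V r par + I1 V r par" using I_all_split[OF rt] .
  show ?case
  proof (cases "v = r")
    case True
    have e1: "Iv V r par v = I1 V r par" unfolding Iv_def I1_def True ..
    have e2: "Ivw V r par v r = I1 V r par" unfolding Ivw_def I1_def True by simp
    have "\<forall>w. is_leaf V r par w \<and> w \<noteq> v \<longrightarrow> 3 * Ivw V r par v w \<ge> Iv V r par v"
    proof (intro allI impI)
      fix w assume "is_leaf V r par w \<and> w \<noteq> v"
      then have "w \<in> V" "w \<noteq> r" using True unfolding is_leaf_def by auto
      then have False using root_leaf[OF rt] lv True by blast
      then show "3 * Ivw V r par v w \<ge> Iv V r par v" ..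
    qed
    moreover have "3 * Iv V r par v \<ge> I_all V r par + 2" using e1 p1 sp by linarith
    moreover have "3 * Ivw V r par v r \<ge> 1 + I1 V r par" using e2 p1 by linarith
    ultimately show ?thesis by blast
  next
    case False
    obtain c where c: "c \<in> V" "c \<noteq> r" "par c = r" "on_root_path r par c v"
      using child_ex[OF rt vV False] by blast
    interpret S: sub V r par c using rt c by unfold_locales auto
    have v1: "v \<in> S.V1" using vV c(4) unfolding S.V1_def by blast
    have IH1: "3 * Iv S.V1 c par v \<ge> I_all S.V1 c par + 2 \<and>
       (\<forall>w. is_leaf S.V1 c par w \<and> w \<noteq> v \<longrightarrow> 3 * Ivw S.V1 c par v w \<ge> Iv S.V1 c par v)"
      using less.hyps[OF S.cardV1 S.rt1 S.leaf1[OF lv v1]] by blast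
    have p2: "I0 S.V2 r par < I1 S.V2 r par" using partI[OF S.rt2] .
    have ii: "3 * Iv V r par v \<ge> I_all V r par + 2"
      unfolding S.F_Iv[OF v1] sp S.F_I0 S.F_I1
      using arith2[where a="Iv S.V1 c par v" and b="I_all S.V1 c par" and q="I1 S.V2 r par" and z="I0 S.V2 r par"] IH1 p2 by simp
    have iv: "3 * Ivw V r par v r \<ge> 1 + I1 V r par"
      unfolding S.F_Ivr[OF v1] S.F_I1
      using arith4[where a="Iv S.V1 c par v" and b="I_all S.V1 c par" and q="I1 S.V2 r par"] IH1 p2 by simp
    have iii: "\<forall>w. is_leaf V r par w \<and> w \<noteq> v \<longrightarrow> 3 * Ivw V r par v w \<ge> Iv V r par v"
    proof (intro allI impI)
      fix w assume w: "is_leaf V r par w \<and> w \<noteq> v"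
      have wV: "w \<in> V" using w unfolding is_leaf_def by blast
      have wr: "w \<noteq> r" using root_leaf[OF rt _ vV] w False by blast
      show "3 * Ivw V r par v w \<ge> Iv V r par v"
      proof (cases "w \<in> S.V1")
        case True
        have "3 * Ivw S.V1 c par v w \<ge> Iv S.V1 c par v" using IH1 S.leaf1[OF _ True] w by blast
        then have "3 * Ivw S.V1 c par v w * (1 + I1 S.V2 r par) \<ge> Iv S.V1 c par v * (1 + I1 S.V2 r par)"
          by (rule mult_right_mono) simp
        then show ?thesis unfolding S.F_Ivw1[OF v1 True] S.F_Iv[OF v1] by (simp add: mult.assoc)
      next
        case False
        then have w2: "w \<in> S.V2" using wV unfolding S.V2_def by blast
        have "3 * Ivw S.V2 r par w r \<ge> 1 + I1 S.V2 r par"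
          using less.hyps[OF S.cardV2 S.rt2 S.leaf2[OF _ w2]] w by blast
        then have "Iv S.V1 c par v * (1 + I1 S.V2 r par) \<le> Iv S.V1 c par v * (3 * Ivw S.V2 r par w r)"
          by (rule mult_left_mono) simp
        then show ?thesis unfolding S.F_Ivw2[OF v1 w2 wr] S.F_Iv[OF v1] by (simp add: algebra_simps)
      qed
    qed
    show ?thesis using ii iv iii by blast
  qed
qed

theorem lemma2p4:
  fixes V :: "'a set" and r :: 'a and par :: "'a \<Rightarrow> 'a"
  assumes "rooted_tree V r par"
  shows "I1 V r par > I0 V r par
    \<and> (\<forall>v. is_leaf V r par v \<longrightarrow> 3 * Iv V r par v \<ge> I_all V r par + 2)
    \<and> (\<forall>v w. is_leaf V r par v \<and> is_leaf V r par w \<and> v \<noteq> w \<longrightarrow>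
           3 * Ivw V r par v w \<ge> Iv V r par v)"
  using partI[OF assms] main[OF assms] by blast

end
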